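(* Let $\{E_\chi\}_{\chi\in\hat G}\subset\mathcal{P}_n$ be a maximal and non-degenerate correctable set of unitary Pauli errors with $E_1=I$ and $E_\chi(\mathcal{H}_{\rm pn})\subset\mathcal{H}_{\rm pn}^\perp$ for $\chi\ne1$. Let $h:\hat G\times G\to G$ be such that for every $g\in G$, $h(\cdot,g):\hat G\to G$ is a bijection with $h(1,g)=g$. Then for every $g\in G$ the operator $\hat E_g:=\sqrt{2^{n-k}}\sum_{\chi\in\hat G}\hat P_{h(\chi,g)}\Pi_{\rm pn}E_\chi$ is unitary on $\mathcal{H}_{\rm kin}$ and satisfies $\hat E_g\Pi_{\rm pn}=\sqrt{2^{n-k}}\hat P_g\Pi_{\rm pn}$.
   Context: Let $n\ge1$, $0\le k<n$, $\mathcal{H}_{\rm kin}=(\mathbb{C}^2)^{\otimes n}$, $\mathcal{P}_n$ the $n$-qubit Pauli group, $G=\mathbb{Z}_2^{\times(n-k)}$, $U:G\to\mathcal{P}_n$, $g\mapsto U^g$, a faithful unitary representation with $-I\notin U(G)$; $\mathcal{H}_{\rm pn}=\{\psi:U^g\psi=\psi\ \forall g\}$, $\Pi_{\rm pn}=\frac1{|G|}\sum_gU^g$. $\hat G$ is the group of characters $\chi:G\to\{\pm1\}$ with trivial character $1$. $\hat U$ is a unitary representation of $\hat G$ on $\mathcal{H}_{\rm kin}$ dual to $U$ ($U^g\hat U^\chi=\chi(g)\hat U^\chi U^g$), and $\hat P_g=\frac1{2^{n-k}}\sum_\chi\chi(g)\hat U^\chi$. A set $\{E_i\}$ is correctable if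 $\Pi_{\rm pn}E_i^\dagger E_j\Pi_{\rm pn}=C_{ij}\Pi_{\rm pn}$ with $(C_{ij})$ Hermitian; maximal if $\mathrm{rank}(C)=2^{n-k}$; non-degenerate if $C$ is invertible. *)

theory Defs
  imports "HOL-Analysis.Analysis" "Jordan_Normal_Form.Schur_Decomposition" "Jordan_Normal_Form.DL_Rank"
begin

text \<open>Computational basis of (C^2)^{\<otimes>n} is indexed by x < 2^n (bit j of x = state of qubit j).
  The Pauli operator X^a Z^b (a, b < 2^n) maps |x> to (-1)^{|b \<and> x|} |x xor a>.\<close>

definition pauli_XZ :: "nat \<Rightarrow> nat \<Rightarrow> nat \<Rightarrow> complex mat" where
  "pauli_XZ n a b = mat (2^n) (2^n) (\<lambda>(y, x).
     if y = Bit_Operations.xor x a then (-1) ^ card {j. j < n \<and> bit b j \<and> bit x j} else 0)"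

definition pauli_group :: "nat \<Rightarrow> complex mat set" where
  "pauli_group n = {c \<cdot>\<^sub>m pauli_XZ n a b | c a b. c \<in> {1, -1, \<i>, -\<i>} \<and> a < 2^n \<and> b < 2^n}"

definition unitary_mat :: "nat \<Rightarrow> complex mat \<Rightarrow> bool" where
  "unitary_mat d A \<longleftrightarrow> A \<in> carrier_mat d d \<and> mat_adjoint A * A = 1\<^sub>m d \<and> A * mat_adjoint A = 1\<^sub>m d"

definition msum :: "nat \<Rightarrow> ('i \<Rightarrow> complex mat) \<Rightarrow> 'i set \<Rightarrow> complex mat" where
  "msum d f I = mat d d (\<lambda>(i, j). \<Sum>x\<in>I. f x $$ (i, j))"

text \<open>G = Z_2^m is modelled as {0..<2^m} with bitwise xor as group operation.\<close>
definition grp :: "nat \<Rightarrow> nat set" where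
  "grp m = {..<2^m}"

text \<open>Characters chi : G \<rightarrow> {+1,-1}, extended by 1 outside G (so the set is finite).\<close>
definition dual_grp :: "nat \<Rightarrow> (nat \<Rightarrow> complex) set" where
  "dual_grp m = {\<xi>. (\<forall>g\<in>grp m. \<xi> g = 1 \<or> \<xi> g = -1)
      \<and> (\<forall>g\<in>grp m. \<forall>h\<in>grp m. \<xi> (Bit_Operations.xor g h) = \<xi> g * \<xi> h)
      \<and> (\<forall>g. g \<notin> grp m \<longrightarrow> \<xi> g = 1)}"

definition triv_char :: "nat \<Rightarrow> complex" where
  "triv_char = (\<lambda>_. 1)"

definition char_mult :: "(nat \<Rightarrow> complex) \<Rightarrow> (nat \<Rightarrow> complex) \<Rightarrow> (nat \<Rightarrow> complex)" where
  "char_mult \<xi> \<xi>' = (\<lambda>g. \<xi> g * \<xi>' g)"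

definition pauli_stab_rep :: "nat \<Rightarrow> nat \<Rightarrow> (nat \<Rightarrow> complex mat) \<Rightarrow> bool" where
  "pauli_stab_rep n m U \<longleftrightarrow>
     (\<forall>g\<in>grp m. U g \<in> pauli_group n \<and> unitary_mat (2^n) (U g))
     \<and> (\<forall>g\<in>grp m. \<forall>h\<in>grp m. U (Bit_Operations.xor g h) = U g * U h)
     \<and> inj_on U (grp m)
     \<and> - (1\<^sub>m (2^n)) \<notin> U ` grp m"

definition dual_rep :: "nat \<Rightarrow> nat \<Rightarrow> (nat \<Rightarrow> complex mat) \<Rightarrow> ((nat \<Rightarrow> complex) \<Rightarrow> complex mat) \<Rightarrow> bool" where
  "dual_rep n m U Uh \<longleftrightarrow>
     (\<forall>\<xi>\<in>dual_grp m. unitary_mat (2^n) (Uh \<xi>))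
     \<and> (\<forall>\<xi>\<in>dual_grp m. \<forall>\<xi>'\<in>dual_grp m. Uh (char_mult \<xi> \<xi>') = Uh \<xi> * Uh \<xi>')
     \<and> (\<forall>g\<in>grp m. \<forall>\<xi>\<in>dual_grp m. U g * Uh \<xi> = \<xi> g \<cdot>\<^sub>m (Uh \<xi> * U g))"

definition proj_pn :: "nat \<Rightarrow> nat \<Rightarrow> (nat \<Rightarrow> complex mat) \<Rightarrow> complex mat" where
  "proj_pn n m U = (1 / of_nat (card (grp m))) \<cdot>\<^sub>m msum (2^n) U (grp m)"

definition H_pn :: "nat \<Rightarrow> nat \<Rightarrow> (nat \<Rightarrow> complex mat) \<Rightarrow> complex vec set" where
  "H_pn n m U = {\<psi> \<in> carrier_vec (2^n). \<forall>g\<in>grp m. U g *\<^sub>v \<psi> = \<psi>}"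

definition hatP :: "nat \<Rightarrow> nat \<Rightarrow> ((nat \<Rightarrow> complex) \<Rightarrow> complex mat) \<Rightarrow> nat \<Rightarrow> complex mat" where
  "hatP n m Uh g = (1 / 2^m) \<cdot>\<^sub>m msum (2^n) (\<lambda>\<xi>. \<xi> g \<cdot>\<^sub>m Uh \<xi>) (dual_grp m)"

definition correctable_with :: "complex mat \<Rightarrow> ('i \<Rightarrow> complex mat) \<Rightarrow> 'i set
    \<Rightarrow> (nat \<Rightarrow> 'i) \<Rightarrow> complex mat \<Rightarrow> bool" where
  "correctable_with Proj E I e C \<longleftrightarrow>
     bij_betw e {..<card I} I \<and> C \<in> carrier_mat (card I) (card I)
     \<and> (\<forall>i<card I. \<forall>j<card I. Proj * mat_adjoint (E (e i)) * E (e j) * Proj = C $$ (i, j) \<cdot>\<^sub>m Proj)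
     \<and> mat_adjoint C = C"

end

theory Submission
  imports Defs
begin


lemma mult_index_sq:
  assumes "A \<in> carrier_mat d d" "B \<in> carrier_mat d d" "i < d" "j < d"
  shows "(A * B) $$ (i,j) = (\<Sum>l<d. A $$ (i,l) * B $$ (l,j))"
  using assms by (auto simp: scalar_prod_def lessThan_atLeast0 intro!: sum.cong)

lemma adj_carrier[simp]: "A \<in> carrier_mat a b \<Longrightarrow> mat_adjoint A \<in> carrier_mat b a"
  unfolding mat_adjoint_def by auto

lemma adj_dims[simp]: "dim_row (mat_adjoint A) = dim_col A" "dim_col (mat_adjoint A) = dim_row A"
  unfolding mat_adjoint_def by auto

lemma adj_index[simp]: "i < dim_col A \<Longrightarrow> j < dim_row A \<Longrightarrow> mat_adjoint A $$ (i,j) = cnj (A $$ (j,i))"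
  unfolding mat_adjoint_def by (simp add: mat_of_rows_index conjugate_vec_def)

lemma adj_mult: assumes A: "(A :: complex mat) \<in> carrier_mat d d" and B: "B \<in> carrier_mat d d"
  shows "mat_adjoint (A * B) = mat_adjoint B * mat_adjoint A"
proof (rule eq_matI)
  fix i j assume "i < dim_row (mat_adjoint B * mat_adjoint A)" "j < dim_col (mat_adjoint B * mat_adjoint A)"
  then have ij: "i < d" "j < d" using assms by auto
  have "mat_adjoint (A * B) $$ (i, j) = cnj ((A * B) $$ (j,i))" using A B ij by simp
  also have "\<dots> = (\<Sum>l<d. cnj (A $$ (j,l)) * cnj (B $$ (l,i)))"
    unfolding mult_index_sq[OF A B ij(2) ij(1)] by (simp add: cnj_sum)
  also have "\<dots> = (mat_adjoint B * mat_adjoint A) $$ (i, j)"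
    unfolding mult_index_sq[OF adj_carrier[OF B] adj_carrier[OF A] ij]
    using A B ij by (auto simp: mult.commute intro!: sum.cong)
  finally show "mat_adjoint (A * B) $$ (i, j) = (mat_adjoint B * mat_adjoint A) $$ (i, j)" .
qed (use assms in auto)

lemma adj_smult: "mat_adjoint (c \<cdot>\<^sub>m A) = cnj c \<cdot>\<^sub>m mat_adjoint A"
  by (rule eq_matI) auto

lemma adj_one[simp]: "mat_adjoint (1\<^sub>m d :: complex mat) = 1\<^sub>m d"
  by (rule eq_matI) auto

lemma adj_adj[simp]: "mat_adjoint (mat_adjoint A) = (A :: complex mat)"
  by (rule eq_matI) auto

lemma msum_carrier[simp]: "msum d f I \<in> carrier_mat d d"
  unfolding msum_def by auto
lemma msum_dims[simp]: "dim_row (msum d f I) = d" "dim_col (msum d f I) = d"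
  unfolding msum_def by auto
lemma msum_index[simp]: "i < d \<Longrightarrow> j < d \<Longrightarrow> msum d f I $$ (i,j) = (\<Sum>x\<in>I. f x $$ (i,j))"
  unfolding msum_def by auto

lemma msum_mult_left:
  assumes A: "A \<in> carrier_mat d d" and f: "\<And>x. x \<in> I \<Longrightarrow> f x \<in> carrier_mat d d"
  shows "A * msum d f I = msum d (\<lambda>x. A * f x) I"
proof (rule eq_matI)
  fix i j assume "i < dim_row (msum d (\<lambda>x. A * f x) I)" "j < dim_col (msum d (\<lambda>x. A * f x) I)"
  then have ij: "i < d" "j < d" by auto
  have "(A * msum d f I) $$ (i,j) = (\<Sum>l<d. A $$ (i,l) * (\<Sum>x\<in>I. f x $$ (l,j)))"
    unfolding mult_index_sq[OF A msum_carrier ij] using ij by simp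
  also have "\<dots> = (\<Sum>x\<in>I. \<Sum>l<d. A $$ (i,l) * f x $$ (l,j))"
    by (simp add: sum_distrib_left sum.swap[of _ I])
  also have "\<dots> = (\<Sum>x\<in>I. (A * f x) $$ (i,j))"
    using A f ij by (intro sum.cong) (auto simp: mult_index_sq[of _ d])
  finally show "(A * msum d f I) $$ (i,j) = msum d (\<lambda>x. A * f x) I $$ (i,j)" using ij by simp
qed (use A in auto)

lemma msum_mult_right:
  assumes A: "A \<in> carrier_mat d d" and f: "\<And>x. x \<in> I \<Longrightarrow> f x \<in> carrier_mat d d"
  shows "msum d f I * A = msum d (\<lambda>x. f x * A) I"
proof (rule eq_matI)
  fix i j assume "i < dim_row (msum d (\<lambda>x. f x * A) I)" "j < dim_col (msum d (\<lambda>x. f x * A) I)"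
  then have ij: "i < d" "j < d" by auto
  have "(msum d f I * A) $$ (i,j) = (\<Sum>l<d. (\<Sum>x\<in>I. f x $$ (i,l)) * A $$ (l,j))"
    unfolding mult_index_sq[OF msum_carrier A ij] using ij by simp
  also have "\<dots> = (\<Sum>x\<in>I. \<Sum>l<d. f x $$ (i,l) * A $$ (l,j))"
    by (simp add: sum_distrib_right sum.swap[of _ I])
  also have "\<dots> = (\<Sum>x\<in>I. (f x * A) $$ (i,j))"
    using A f ij by (intro sum.cong) (auto simp: mult_index_sq[of _ d A])
  finally show "(msum d f I * A) $$ (i,j) = msum d (\<lambda>x. f x * A) I $$ (i,j)" using ij by simp
qed (use A in auto)

lemma msum_smult:
  assumes f: "\<And>x. x \<in> I \<Longrightarrow> f x \<in> carrier_mat d d"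
  shows "c \<cdot>\<^sub>m msum d f I = msum d (\<lambda>x. c \<cdot>\<^sub>m f x) I"
proof -
  have D: "\<And>x. x \<in> I \<Longrightarrow> dim_row (f x) = d \<and> dim_col (f x) = d" using f by auto
  show ?thesis by (rule eq_matI) (auto simp: D sum_distrib_left intro!: sum.cong)
qed

lemma msum_scalar:
  assumes A: "A \<in> carrier_mat d d"
  shows "msum d (\<lambda>x. c x \<cdot>\<^sub>m A) I = (\<Sum>x\<in>I. c x) \<cdot>\<^sub>m A"
  by (rule eq_matI) (use A in \<open>auto simp: sum_distrib_right\<close>)

lemma msum_cong: "(\<And>x. x \<in> I \<Longrightarrow> f x = g x) \<Longrightarrow> msum d f I = msum d g I"
  unfolding msum_def by (auto intro!: sum.cong)

lemma msum_reindex: "bij_betw \<phi> J I \<Longrightarrow> msum d f I = msum d (\<lambda>y. f (\<phi> y)) J"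
  unfolding msum_def by (auto simp: sum.reindex_bij_betw[symmetric])

lemma msum_single:
  assumes "a \<in> I" "finite I" "\<And>x. x \<in> I \<Longrightarrow> x \<noteq> a \<Longrightarrow> f x = 0\<^sub>m d d" "f a \<in> carrier_mat d d"
  shows "msum d f I = f a"
proof (rule eq_matI)
  fix i j assume "i < dim_row (f a)" "j < dim_col (f a)"
  then have ij: "i < d" "j < d" using assms by auto
  have "(\<Sum>x\<in>I. f x $$ (i,j)) = (\<Sum>x\<in>I. if x = a then f a $$ (i,j) else 0)"
    using assms ij by (intro sum.cong) auto
  also have "\<dots> = f a $$ (i,j)" using assms by simp
  finally show "msum d f I $$ (i,j) = f a $$ (i,j)" using ij by simp
qed (use assms in auto)

lemma msum_swap: "msum d (\<lambda>x. msum d (\<lambda>y. f x y) J) I = msum d (\<lambda>y. msum d (\<lambda>x. f x y) I) J"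
  by (rule eq_matI) (auto intro: sum.swap)

lemma adj_msum:
  assumes f: "\<And>x. x \<in> I \<Longrightarrow> f x \<in> carrier_mat d d"
  shows "mat_adjoint (msum d f I) = msum d (\<lambda>x. mat_adjoint (f x)) I"
proof -
  have D: "\<And>x. x \<in> I \<Longrightarrow> dim_row (f x) = d \<and> dim_col (f x) = d" using f by auto
  show ?thesis by (rule eq_matI) (auto simp: D cnj_sum intro!: sum.cong)
qed

section \<open>Bits\<close>

abbreviation bx :: "nat \<Rightarrow> nat \<Rightarrow> nat" where "bx a b \<equiv> Bit_Operations.xor a b"

lemma xor_lt: "(a::nat) < 2^n \<Longrightarrow> b < 2^n \<Longrightarrow> bx a b < 2^n"
  by (metis take_bit_nat_eq_self_iff take_bit_xor)

lemma bit_lt: "(x::nat) < 2^n \<Longrightarrow> bit x j \<Longrightarrow> j < n"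
  by (metis bit_take_bit_iff take_bit_nat_eq_self_iff)

lemma xor_cancel[simp]: "bx (bx a b) b = (a::nat)" "bx a (bx a b) = (b::nat)" "bx (bx a b) a = (b::nat)"
  by (auto simp: bit_eq_iff bit_xor_iff)

lemma xor_eq_iff: "(y = bx x (a::nat)) = (x = bx y a)"
  by auto

definition sgnb :: "nat \<Rightarrow> nat \<Rightarrow> nat \<Rightarrow> complex" where
  "sgnb n b x = (-1) ^ card {j. j < n \<and> bit b j \<and> bit x j}"

lemma sgnb_xor: "sgnb n b (bx x y) = sgnb n b x * sgnb n b y"
proof -
  define A where "A = {j. j < n \<and> bit b j \<and> bit x j}"
  define B where "B = {j. j < n \<and> bit b j \<and> bit y j}"
  have fA: "finite A" and fB: "finite B" unfolding A_def B_def by auto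
  have eq: "{j. j < n \<and> bit b j \<and> bit (bx x y) j} = (A - B) \<union> (B - A)"
    unfolding A_def B_def by (auto simp: bit_xor_iff)
  have c1: "card ((A - B) \<union> (B - A)) = card (A - B) + card (B - A)"
    using fA fB by (intro card_Un_disjoint) auto
  have c2: "card A = card (A - B) + card (A \<inter> B)"
    using fA by (metis Int_Diff_Un Int_Diff_disjoint card_Un_disjoint finite_Diff finite_Int Un_commute inf_commute)
  have c3: "card B = card (B - A) + card (A \<inter> B)"
    using fB by (metis Int_Diff_Un Int_Diff_disjoint card_Un_disjoint finite_Diff finite_Int Un_commute inf_commute)
  have sq: "((-1::complex) ^ card (A \<inter> B)) * ((-1) ^ card (A \<inter> B)) = 1"
    by (metis power_add[symmetric] mult_2[symmetric] power_mult power_minus1_even mult.commute)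
  show ?thesis
    unfolding sgnb_def eq c1 A_def[symmetric] B_def[symmetric] c2 c3 power_add
    using sq by (simp add: algebra_simps)
qed

lemma sgnb_sym: "sgnb n b x = sgnb n x b"
  unfolding sgnb_def by (simp add: conj_commute)

lemma sgnb_xor2: "sgnb n (bx b c) x = sgnb n b x * sgnb n c x"
  by (metis sgnb_sym sgnb_xor)

lemma sgnb_pm: "sgnb n b x = 1 \<or> sgnb n b x = -1"
  unfolding sgnb_def by (metis neg_one_even_power neg_one_odd_power)

lemma sgnb_sq[simp]: "sgnb n b x * sgnb n b x = 1"
  using sgnb_pm[of n b x] by auto

lemma sgnb_cnj[simp]: "cnj (sgnb n b x) = sgnb n b x"
  using sgnb_pm[of n b x] by auto

lemma sgnb_0[simp]: "sgnb n 0 x = 1" "sgnb n b 0 = 1"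
  unfolding sgnb_def by auto

section \<open>Pauli algebra\<close>

lemma XZ_carrier[simp]: "pauli_XZ n a b \<in> carrier_mat (2^n) (2^n)"
  unfolding pauli_XZ_def by auto

lemma XZ_dims[simp]: "dim_row (pauli_XZ n a b) = 2^n" "dim_col (pauli_XZ n a b) = 2^n"
  unfolding pauli_XZ_def by auto

lemma XZ_index: "y < 2^n \<Longrightarrow> x < 2^n \<Longrightarrow>
  pauli_XZ n a b $$ (y,x) = (if y = bx x a then sgnb n b x else 0)"
  unfolding pauli_XZ_def sgnb_def by auto

lemma XZ_mult:
  assumes "a < 2^n" "a' < 2^n"
  shows "pauli_XZ n a b * pauli_XZ n a' b' = sgnb n b a' \<cdot>\<^sub>m pauli_XZ n (bx a a') (bx b b')"
proof (rule eq_matI)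
  fix y x assume "y < dim_row (sgnb n b a' \<cdot>\<^sub>m pauli_XZ n (bx a a') (bx b b'))"
    "x < dim_col (sgnb n b a' \<cdot>\<^sub>m pauli_XZ n (bx a a') (bx b b'))"
  then have yx: "y < 2^n" "x < 2^n" by auto
  have xa: "bx x a' < 2^n" using xor_lt yx assms by auto
  have "(pauli_XZ n a b * pauli_XZ n a' b') $$ (y,x)
     = (\<Sum>z<2^n. pauli_XZ n a b $$ (y,z) * pauli_XZ n a' b' $$ (z,x))"
    by (rule mult_index_sq[OF XZ_carrier XZ_carrier yx])
  also have "\<dots> = (\<Sum>z<2^n. if z = bx x a' then (if y = bx z a then sgnb n b z else 0) * sgnb n b' x else 0)"
    using yx by (intro sum.cong) (auto simp: XZ_index)
  also have "\<dots> = (if y = bx (bx x a') a then sgnb n b (bx x a') else 0) * sgnb n b' x"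
    using xa by simp
  also have "\<dots> = (sgnb n b a' \<cdot>\<^sub>m pauli_XZ n (bx a a') (bx b b')) $$ (y,x)"
    using yx by (auto simp: XZ_index sgnb_xor sgnb_xor2 xor.assoc xor.commute xor.left_commute)
  finally show "(pauli_XZ n a b * pauli_XZ n a' b') $$ (y,x) = (sgnb n b a' \<cdot>\<^sub>m pauli_XZ n (bx a a') (bx b b')) $$ (y,x)" .
qed auto

lemma XZ_adj:
  assumes "a < 2^n"
  shows "mat_adjoint (pauli_XZ n a b) = sgnb n b a \<cdot>\<^sub>m pauli_XZ n a b"
proof (rule eq_matI)
  fix y x assume "y < dim_row (sgnb n b a \<cdot>\<^sub>m pauli_XZ n a b)" "x < dim_col (sgnb n b a \<cdot>\<^sub>m pauli_XZ n a b)"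
  then have yx: "y < 2^n" "x < 2^n" by auto
  show "mat_adjoint (pauli_XZ n a b) $$ (y,x) = (sgnb n b a \<cdot>\<^sub>m pauli_XZ n a b) $$ (y,x)"
    using yx by (auto simp: XZ_index sgnb_xor mult.commute)
qed auto

lemma XZ_00: "pauli_XZ n 0 0 = 1\<^sub>m (2^n)"
  by (rule eq_matI) (auto simp: XZ_index)

lemma smult_smult_m: "a \<cdot>\<^sub>m (b \<cdot>\<^sub>m A) = (a * b :: complex) \<cdot>\<^sub>m A"
  by (rule eq_matI) auto

lemma one_smult_m[simp]: "(1::complex) \<cdot>\<^sub>m A = A"
  by (rule eq_matI) auto

lemma smult_mult_smult:
  assumes "X \<in> carrier_mat d d" "Y \<in> carrier_mat d d"
  shows "(a \<cdot>\<^sub>m X) * (b \<cdot>\<^sub>m Y) = (a * b :: complex) \<cdot>\<^sub>m (X * Y)"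
  using assms by (simp add: mult_smult_assoc_mat[of _ d d] mult_smult_distrib[of _ d d] smult_smult_m mult.commute)

lemma pauli_decomp:
  assumes "A \<in> pauli_group n"
  obtains c a b where "c \<in> {1, -1, \<i>, -\<i>}" "a < 2^n" "b < 2^n" "A = c \<cdot>\<^sub>m pauli_XZ n a b"
  using assms unfolding pauli_group_def by auto

lemma pauli_carrier: "A \<in> pauli_group n \<Longrightarrow> A \<in> carrier_mat (2^n) (2^n)"
  by (erule pauli_decomp) auto

lemma XZ_sq: "a < 2^n \<Longrightarrow> pauli_XZ n a b * pauli_XZ n a b = sgnb n b a \<cdot>\<^sub>m 1\<^sub>m (2^n)"
  by (simp add: XZ_mult XZ_00)

lemma pauli_unitary:
  assumes "A \<in> pauli_group n"
  shows "mat_adjoint A * A = 1\<^sub>m (2^n)" "A * mat_adjoint A = 1\<^sub>m (2^n)"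
proof -
  obtain c a b where c: "c \<in> {1, -1, \<i>, -\<i>}" and ab: "a < 2^n" "b < 2^n" and A: "A = c \<cdot>\<^sub>m pauli_XZ n a b"
    using assms by (rule pauli_decomp)
  have cc: "cnj c * c = 1" "c * cnj c = 1" using c by auto
  have adjA: "mat_adjoint A = (cnj c * sgnb n b a) \<cdot>\<^sub>m pauli_XZ n a b"
    unfolding A adj_smult XZ_adj[OF ab(1)] smult_smult_m ..
  have "mat_adjoint A * A = (cnj c * sgnb n b a * c * sgnb n b a) \<cdot>\<^sub>m 1\<^sub>m (2^n)"
    unfolding adjA unfolding A smult_mult_smult[OF XZ_carrier XZ_carrier] XZ_sq[OF ab(1)] smult_smult_m
    by (simp add: algebra_simps)
  also have "\<dots> = 1\<^sub>m (2^n)" using cc by (simp add: algebra_simps)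
  finally show "mat_adjoint A * A = 1\<^sub>m (2^n)" .
  have "A * mat_adjoint A = (c * cnj c * sgnb n b a * sgnb n b a) \<cdot>\<^sub>m 1\<^sub>m (2^n)"
    unfolding adjA unfolding A smult_mult_smult[OF XZ_carrier XZ_carrier] XZ_sq[OF ab(1)] smult_smult_m
    by (simp add: algebra_simps)
  also have "\<dots> = 1\<^sub>m (2^n)" using cc by (simp add: algebra_simps)
  finally show "A * mat_adjoint A = 1\<^sub>m (2^n)" .
qed

lemma pauli_adj:
  assumes "A \<in> pauli_group n"
  shows "mat_adjoint A \<in> pauli_group n"
proof -
  obtain c a b where c: "c \<in> {1, -1, \<i>, -\<i>}" and ab: "a < 2^n" "b < 2^n" and A: "A = c \<cdot>\<^sub>m pauli_XZ n a b"
    using assms by (rule pauli_decomp)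
  have adjA: "mat_adjoint A = (cnj c * sgnb n b a) \<cdot>\<^sub>m pauli_XZ n a b"
    unfolding A adj_smult XZ_adj[OF ab(1)] smult_smult_m ..
  have "cnj c * sgnb n b a \<in> {1, -1, \<i>, -\<i>}" using c sgnb_pm[of n b a] by auto
  then show ?thesis unfolding adjA pauli_group_def using ab by blast
qed

lemma pauli_comm:
  assumes "A \<in> pauli_group n" "B \<in> pauli_group n"
  shows "\<exists>\<sigma>. (\<sigma> = 1 \<or> \<sigma> = -1) \<and> A * B = \<sigma> \<cdot>\<^sub>m (B * A)"
proof -
  obtain c a b where c: "c \<in> {1, -1, \<i>, -\<i>}" and ab: "a < 2^n" "b < 2^n" and A: "A = c \<cdot>\<^sub>m pauli_XZ n a b"
    using assms(1) by (rule pauli_decomp)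
  obtain c' a' b' where c': "c' \<in> {1, -1, \<i>, -\<i>}" and ab': "a' < 2^n" "b' < 2^n" and B: "B = c' \<cdot>\<^sub>m pauli_XZ n a' b'"
    using assms(2) by (rule pauli_decomp)
  have AB: "A * B = (c * c' * sgnb n b a') \<cdot>\<^sub>m pauli_XZ n (bx a a') (bx b b')"
    unfolding A B smult_mult_smult[OF XZ_carrier XZ_carrier] XZ_mult[OF ab(1) ab'(1)] smult_smult_m ..
  have BA: "B * A = (c' * c * sgnb n b' a) \<cdot>\<^sub>m pauli_XZ n (bx a a') (bx b b')"
    unfolding A B smult_mult_smult[OF XZ_carrier XZ_carrier] XZ_mult[OF ab'(1) ab(1)] smult_smult_m
    by (simp add: xor.commute)
  define \<sigma> where "\<sigma> = sgnb n b a' * sgnb n b' a"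
  have "\<sigma> = 1 \<or> \<sigma> = -1" unfolding \<sigma>_def using sgnb_pm[of n b a'] sgnb_pm[of n b' a] by auto
  moreover have "A * B = \<sigma> \<cdot>\<^sub>m (B * A)"
    unfolding AB BA smult_smult_m \<sigma>_def
    by (metis (no_types, lifting) mult.assoc mult.commute mult.left_commute mult_1 sgnb_sq)
  ultimately show ?thesis by blast
qed

lemma msum_const: "A \<in> carrier_mat d d \<Longrightarrow> msum d (\<lambda>x. A) I = of_nat (card I) \<cdot>\<^sub>m A"
  by (rule eq_matI) auto

lemma msum_zero: "msum d (\<lambda>x. 0\<^sub>m d d) I = 0\<^sub>m d d"
  by (rule eq_matI) auto

lemma adj_self_if_inv:
  assumes "A \<in> carrier_mat d d" "mat_adjoint A * A = 1\<^sub>m d" "A * A = (1\<^sub>m d :: complex mat)"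
  shows "mat_adjoint A = A"
proof -
  have dA: "dim_row A = d" "dim_col A = d" using assms by auto
  have "mat_adjoint A = mat_adjoint A * (A * A)" using assms dA by simp
  also have "\<dots> = (mat_adjoint A * A) * A" by (rule assoc_mult_mat[symmetric]) (use assms in auto)
  also have "\<dots> = 1\<^sub>m d * A" by (simp only: assms(2))
  finally show ?thesis using assms by simp
qed

lemma one_if_idem:
  assumes "A \<in> carrier_mat d d" "mat_adjoint A * A = 1\<^sub>m d" "A * A = (A :: complex mat)"
  shows "A = 1\<^sub>m d"
proof -
  have dA: "dim_row A = d" "dim_col A = d" using assms by auto
  have "A = 1\<^sub>m d * A" using assms dA by simp
  also have "\<dots> = (mat_adjoint A * A) * A" by (simp only: assms(2))
  also have "\<dots> = mat_adjoint A * (A * A)" by (rule assoc_mult_mat) (use assms in auto)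
  also have "\<dots> = 1\<^sub>m d" by (simp only: assms(3) assms(2))
  finally show ?thesis .
qed

lemma neg_self_zero: "(X :: complex mat) = (-1) \<cdot>\<^sub>m X \<Longrightarrow> X = 0\<^sub>m (dim_row X) (dim_col X)"
proof (rule eq_matI)
  fix i j assume X: "X = (-1) \<cdot>\<^sub>m X" and ij: "i < dim_row (0\<^sub>m (dim_row X) (dim_col X))" "j < dim_col (0\<^sub>m (dim_row X) (dim_col X))"
  have "X $$ (i,j) = - X $$ (i,j)" using ij by (subst X) auto
  then show "X $$ (i,j) = 0\<^sub>m (dim_row X) (dim_col X) $$ (i,j)" using ij by simp
qed auto

lemma bit_exists: "(x::nat) \<noteq> 0 \<Longrightarrow> \<exists>j. bit x j"
proof (rule ccontr)
  assume "x \<noteq> 0" "\<not> (\<exists>j. bit x j)"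
  then have "x = 0" by (intro bit_eqI) auto
  then show False using \<open>x \<noteq> 0\<close> by simp
qed

locale setting =
  fixes n m :: nat and U :: "nat \<Rightarrow> complex mat" and Uh :: "(nat \<Rightarrow> complex) \<Rightarrow> complex mat"
    and E :: "(nat \<Rightarrow> complex) \<Rightarrow> complex mat" and h :: "(nat \<Rightarrow> complex) \<Rightarrow> nat \<Rightarrow> nat"
    and e :: "nat \<Rightarrow> (nat \<Rightarrow> complex)" and C :: "complex mat"
  assumes stab: "pauli_stab_rep n m U"
    and dual: "dual_rep n m U Uh"
    and Ep: "\<forall>\<xi>\<in>dual_grp m. E \<xi> \<in> pauli_group n"
    and cw: "correctable_with (proj_pn n m U) E (dual_grp m) e C"
    and Cinv: "invertible_mat C"
    and E1: "E triv_char = 1\<^sub>m (2^n)"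
    and hb: "\<forall>g\<in>grp m. bij_betw (\<lambda>\<xi>. h \<xi> g) (dual_grp m) (grp m) \<and> h triv_char g = g"
begin

abbreviation "G \<equiv> grp m"
abbreviation "D \<equiv> dual_grp m"
abbreviation "P \<equiv> proj_pn n m U"
abbreviation "Ph \<equiv> hatP n m Uh"

lemma G_simps: "0 \<in> G" "finite G" "card G = 2^m"
  unfolding grp_def by auto

lemma G_xor[simp]: "a \<in> G \<Longrightarrow> b \<in> G \<Longrightarrow> bx a b \<in> G"
  unfolding grp_def using xor_lt by auto

lemma G_bij: "g \<in> G \<Longrightarrow> bij_betw (bx g) G G"
  by (rule bij_betw_byWitness[where f'="bx g"]) auto

lemma D_pm: "\<xi> \<in> D \<Longrightarrow> \<xi> x * \<xi> x = 1"
  unfolding dual_grp_def by (cases "x \<in> G") auto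

lemma D_cnj[simp]: "\<xi> \<in> D \<Longrightarrow> cnj (\<xi> x) = \<xi> x"
  unfolding dual_grp_def by (cases "x \<in> G") auto

lemma D_mult: "\<xi> \<in> D \<Longrightarrow> a \<in> G \<Longrightarrow> b \<in> G \<Longrightarrow> \<xi> (bx a b) = \<xi> a * \<xi> b"
  unfolding dual_grp_def by auto

lemma D_0: "\<xi> \<in> D \<Longrightarrow> \<xi> 0 = 1"
proof -
  assume x: "\<xi> \<in> D"
  have "\<xi> 0 = \<xi> 0 * \<xi> 0" using D_mult[OF x G_simps(1) G_simps(1)] by simp
  then show ?thesis using D_pm[OF x, of 0] by simp
qed

lemma triv_D: "triv_char \<in> D"
  unfolding dual_grp_def triv_char_def by auto

lemma cm_D: assumes "\<xi> \<in> D" "\<eta> \<in> D" shows "char_mult \<xi> \<eta> \<in> D"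
  unfolding dual_grp_def char_mult_def
proof (intro CollectI conjI ballI allI impI)
  fix g assume g: "g \<in> G"
  then have "\<xi> g = 1 \<or> \<xi> g = -1" "\<eta> g = 1 \<or> \<eta> g = -1" using assms unfolding dual_grp_def by auto
  then show "\<xi> g * \<eta> g = 1 \<or> \<xi> g * \<eta> g = - 1" by auto
next
  fix g h assume "g \<in> G" "h \<in> G"
  then show "\<xi> (bx g h) * \<eta> (bx g h) = \<xi> g * \<eta> g * (\<xi> h * \<eta> h)"
    using assms by (simp add: D_mult algebra_simps)
next
  fix g assume "g \<notin> G"
  then show "\<xi> g * \<eta> g = 1" using assms unfolding dual_grp_def by auto
qed

lemma cm_cancel: "\<xi> \<in> D \<Longrightarrow> char_mult \<xi> (char_mult \<xi> \<eta>) = \<eta>"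
  unfolding char_mult_def using D_pm by (auto simp: mult.assoc[symmetric])

lemma cm_self: "\<xi> \<in> D \<Longrightarrow> char_mult \<xi> \<xi> = triv_char"
  unfolding char_mult_def triv_char_def using D_pm by auto

lemma cm_triv: "char_mult triv_char triv_char = triv_char"
  unfolding char_mult_def triv_char_def by auto

lemma D_bij: "\<xi> \<in> D \<Longrightarrow> bij_betw (char_mult \<xi>) D D"
  by (rule bij_betw_byWitness[where f'="char_mult \<xi>"]) (auto simp: cm_cancel cm_D)

lemma D_fin: "finite D" and D_card: "card D = 2^m"
proof -
  have b: "bij_betw (\<lambda>\<xi>. h \<xi> 0) D G" using hb G_simps by auto
  show "finite D" using bij_betw_finite[OF b] G_simps by auto
  show "card D = 2^m" using bij_betw_same_card[OF b] G_simps by auto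
qed

lemma D_nontriv: "\<xi> \<in> D \<Longrightarrow> \<xi> \<noteq> triv_char \<Longrightarrow> \<exists>g\<in>G. \<xi> g = -1"
proof -
  assume x: "\<xi> \<in> D" "\<xi> \<noteq> triv_char"
  then obtain g where g: "\<xi> g \<noteq> 1" unfolding triv_char_def by auto
  then have "g \<in> G" using x unfolding dual_grp_def by auto
  then show ?thesis using g x unfolding dual_grp_def by auto
qed

lemma charsum_D: "x \<in> G \<Longrightarrow> (\<Sum>\<xi>\<in>D. \<xi> x) = (if x = 0 then 2^m else 0)"
proof (cases "x = 0")
  case True
  have "(\<Sum>\<xi>\<in>D. \<xi> x) = (\<Sum>\<xi>\<in>D. 1)" using True by (intro sum.cong) (auto simp: D_0)
  then show "x \<in> G \<Longrightarrow> ?thesis" using D_card True by simp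
next
  case False
  assume xG: "x \<in> G"
  obtain j where j: "bit x j" using bit_exists[OF False] by blast
  define \<xi>0 :: "nat \<Rightarrow> complex" where "\<xi>0 = (\<lambda>y. if y \<in> G \<and> bit y j then -1 else 1)"
  have x0: "\<xi>0 x = -1" using xG j unfolding \<xi>0_def by auto
  have "\<xi>0 \<in> D" unfolding dual_grp_def
  proof (intro CollectI conjI ballI allI impI)
    fix g h assume "g \<in> G" "h \<in> G"
    then show "\<xi>0 (bx g h) = \<xi>0 g * \<xi>0 h" unfolding \<xi>0_def by (auto simp: bit_xor_iff)
  qed (auto simp: \<xi>0_def)
  then have "(\<Sum>\<xi>\<in>D. \<xi> x) = (\<Sum>\<xi>\<in>D. char_mult \<xi>0 \<xi> x)"
    using sum.reindex_bij_betw[OF D_bij, of \<xi>0 "\<lambda>\<xi>. \<xi> x"] by simp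
  also have "\<dots> = - (\<Sum>\<xi>\<in>D. \<xi> x)" unfolding char_mult_def x0 by (simp add: sum_negf)
  finally show ?thesis using False by simp
qed

lemma charsum_G: "\<xi> \<in> D \<Longrightarrow> (\<Sum>a\<in>G. \<xi> a) = (if \<xi> = triv_char then 2^m else 0)"
proof (cases "\<xi> = triv_char")
  case True
  then show ?thesis using G_simps by (simp add: triv_char_def)
next
  case False
  assume x: "\<xi> \<in> D"
  obtain g where g: "g \<in> G" "\<xi> g = -1" using D_nontriv[OF x False] by blast
  have "(\<Sum>a\<in>G. \<xi> a) = (\<Sum>a\<in>G. \<xi> (bx g a))"
    using sum.reindex_bij_betw[OF G_bij[OF g(1)], of \<xi>] by simp
  also have "\<dots> = - (\<Sum>a\<in>G. \<xi> a)" using g x by (simp add: D_mult sum_negf)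
  finally show ?thesis using False by simp
qed

end





context setting begin

lemma U_props: "g \<in> G \<Longrightarrow> U g \<in> pauli_group n" "g \<in> G \<Longrightarrow> unitary_mat (2^n) (U g)"
  using stab unfolding pauli_stab_rep_def by auto

lemma U_carrier[simp]: "g \<in> G \<Longrightarrow> U g \<in> carrier_mat (2^n) (2^n)"
  using U_props unfolding unitary_mat_def by auto

lemma U_dims[simp]: "g \<in> G \<Longrightarrow> dim_row (U g) = 2^n" "g \<in> G \<Longrightarrow> dim_col (U g) = 2^n"
  using U_carrier carrier_matD by blast+

lemma U_mult: "g \<in> G \<Longrightarrow> y \<in> G \<Longrightarrow> U (bx g y) = U g * U y"
  using stab unfolding pauli_stab_rep_def by auto

lemma U_adjU: "g \<in> G \<Longrightarrow> mat_adjoint (U g) * U g = 1\<^sub>m (2^n)"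
  using U_props unfolding unitary_mat_def by auto

lemma U_0: "U 0 = 1\<^sub>m (2^n)"
proof (rule one_if_idem[of _ "2^n"])
  show "U 0 * U 0 = U 0" using U_mult[OF G_simps(1) G_simps(1)] by (simp only: xor_self_eq)
qed (use U_adjU[OF G_simps(1)] G_simps(1) in auto)

lemma U_sq: "g \<in> G \<Longrightarrow> U g * U g = 1\<^sub>m (2^n)"
  using U_mult[of g g] U_0 by (simp only: xor_self_eq)

lemma U_adj: "g \<in> G \<Longrightarrow> mat_adjoint (U g) = U g"
  using U_sq U_adjU by (intro adj_self_if_inv[of _ "2^n"]) auto

lemma P_def': "P = (1 / 2^m) \<cdot>\<^sub>m msum (2^n) U G"
  unfolding proj_pn_def G_simps by simp

lemma P_carrier[simp]: "P \<in> carrier_mat (2^n) (2^n)"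
  unfolding P_def' by simp

lemma P_dims[simp]: "dim_row P = 2^n" "dim_col P = 2^n"
  using carrier_matD[OF P_carrier] by auto

lemma msumU_left: "g \<in> G \<Longrightarrow> U g * msum (2^n) U G = msum (2^n) U G"
proof -
  assume g: "g \<in> G"
  have "U g * msum (2^n) U G = msum (2^n) (\<lambda>x. U g * U x) G"
    using g by (intro msum_mult_left) auto
  also have "\<dots> = msum (2^n) (\<lambda>x. U (bx g x)) G"
    using g by (intro msum_cong) (simp add: U_mult)
  also have "\<dots> = msum (2^n) U G"
    using msum_reindex[OF G_bij[OF g], of "2^n" U] by simp
  finally show ?thesis .
qed

lemma msumU_right: "g \<in> G \<Longrightarrow> msum (2^n) U G * U g = msum (2^n) U G"
proof -
  assume g: "g \<in> G"
  have "msum (2^n) U G * U g = msum (2^n) (\<lambda>x. U x * U g) G"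
    using g by (intro msum_mult_right) auto
  also have "\<dots> = msum (2^n) (\<lambda>x. U (bx g x)) G"
    using g by (intro msum_cong) (simp add: U_mult[symmetric] xor.commute)
  also have "\<dots> = msum (2^n) U G"
    using msum_reindex[OF G_bij[OF g], of "2^n" U] by simp
  finally show ?thesis .
qed

lemma U_P: "g \<in> G \<Longrightarrow> U g * P = P"
  unfolding P_def' by (simp only: mult_smult_distrib[OF U_carrier msum_carrier] msumU_left)

lemma P_U: "g \<in> G \<Longrightarrow> P * U g = P"
  unfolding P_def' by (simp only: mult_smult_assoc_mat[OF msum_carrier U_carrier] msumU_right)

lemma P_idem: "P * P = P"
proof -
  have "msum (2^n) U G * P = msum (2^n) (\<lambda>x. U x * P) G"
    by (intro msum_mult_right) auto
  also have "\<dots> = msum (2^n) (\<lambda>x. P) G"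
    by (intro msum_cong) (simp add: U_P)
  also have "\<dots> = of_nat (2^m) \<cdot>\<^sub>m P"
    using G_simps by (simp add: msum_const)
  finally have "msum (2^n) U G * P = of_nat (2^m) \<cdot>\<^sub>m P" .
  then have "P * P = (1 / 2^m) \<cdot>\<^sub>m (of_nat (2^m) \<cdot>\<^sub>m P)"
    by (subst (1) P_def') (simp only: mult_smult_assoc_mat[OF msum_carrier P_carrier])
  then show ?thesis by (simp add: smult_smult_m)
qed

lemma P_adj: "mat_adjoint P = P"
proof -
  have "mat_adjoint P = (1 / 2^m) \<cdot>\<^sub>m msum (2^n) (\<lambda>x. mat_adjoint (U x)) G"
    unfolding P_def' adj_smult by (subst adj_msum[of _ _ "2^n"]) auto
  also have "\<dots> = P" unfolding P_def' by (intro arg_cong[where f="\<lambda>M. _ \<cdot>\<^sub>m M"] msum_cong) (simp add: U_adj)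
  finally show ?thesis .
qed

lemma Uh_unit: "\<xi> \<in> D \<Longrightarrow> unitary_mat (2^n) (Uh \<xi>)"
  using dual unfolding dual_rep_def by blast

lemma Uh_carrier[simp]: "\<xi> \<in> D \<Longrightarrow> Uh \<xi> \<in> carrier_mat (2^n) (2^n)"
  using Uh_unit unfolding unitary_mat_def by auto

lemma Uh_dims[simp]: "\<xi> \<in> D \<Longrightarrow> dim_row (Uh \<xi>) = 2^n" "\<xi> \<in> D \<Longrightarrow> dim_col (Uh \<xi>) = 2^n"
  using Uh_carrier carrier_matD by blast+

lemma Uh_mult: "\<xi> \<in> D \<Longrightarrow> \<eta> \<in> D \<Longrightarrow> Uh (char_mult \<xi> \<eta>) = Uh \<xi> * Uh \<eta>"
  using dual unfolding dual_rep_def by blast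

lemma U_Uh: "g \<in> G \<Longrightarrow> \<xi> \<in> D \<Longrightarrow> U g * Uh \<xi> = \<xi> g \<cdot>\<^sub>m (Uh \<xi> * U g)"
  using dual unfolding dual_rep_def by blast

lemma Uh_triv: "Uh triv_char = 1\<^sub>m (2^n)"
proof (rule one_if_idem[of _ "2^n"])
  show "Uh triv_char * Uh triv_char = Uh triv_char" using Uh_mult[OF triv_D triv_D] by (simp only: cm_triv)
qed (use Uh_unit[OF triv_D] triv_D in \<open>auto simp: unitary_mat_def\<close>)

lemma Uh_sq: "\<xi> \<in> D \<Longrightarrow> Uh \<xi> * Uh \<xi> = 1\<^sub>m (2^n)"
  using Uh_mult[of \<xi> \<xi>] cm_self Uh_triv by (simp only:)

lemma Uh_adj: "\<xi> \<in> D \<Longrightarrow> mat_adjoint (Uh \<xi>) = Uh \<xi>"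
  using Uh_sq Uh_unit by (intro adj_self_if_inv[of _ "2^n"]) (auto simp: unitary_mat_def)


lemma assoc_n[simp]: "X \<in> carrier_mat (2^n) (2^n) \<Longrightarrow> Y \<in> carrier_mat (2^n) (2^n) \<Longrightarrow> Z \<in> carrier_mat (2^n) (2^n)
  \<Longrightarrow> X * Y * Z = X * (Y * (Z :: complex mat))"
  by (rule assoc_mult_mat)

lemma Ph_def': "Ph a = (1 / 2^m) \<cdot>\<^sub>m msum (2^n) (\<lambda>\<xi>. \<xi> a \<cdot>\<^sub>m Uh \<xi>) D"
  unfolding hatP_def by simp

lemma Ph_carrier[simp]: "Ph a \<in> carrier_mat (2^n) (2^n)"
  unfolding Ph_def' by simp

lemma Ph_dims[simp]: "dim_row (Ph a) = 2^n" "dim_col (Ph a) = 2^n"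
  using carrier_matD[OF Ph_carrier] by auto

lemma mult_sq_carrier[simp]: "A \<in> carrier_mat d d \<Longrightarrow> B \<in> carrier_mat d d \<Longrightarrow> A * B \<in> carrier_mat d d"
  by (rule mult_carrier_mat)

lemma zero_smult_m: "A \<in> carrier_mat d d \<Longrightarrow> (0::complex) \<cdot>\<^sub>m A = 0\<^sub>m d d"
  by (rule eq_matI) auto

lemma Ph_adj: "mat_adjoint (Ph a) = Ph a"
proof -
  have "mat_adjoint (msum (2^n) (\<lambda>\<xi>. \<xi> a \<cdot>\<^sub>m Uh \<xi>) D) = msum (2^n) (\<lambda>\<xi>. mat_adjoint (\<xi> a \<cdot>\<^sub>m Uh \<xi>)) D"
    by (rule adj_msum) auto
  also have "\<dots> = msum (2^n) (\<lambda>\<xi>. \<xi> a \<cdot>\<^sub>m Uh \<xi>) D"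
    by (intro msum_cong) (simp add: adj_smult Uh_adj)
  finally have M: "mat_adjoint (msum (2^n) (\<lambda>\<xi>. \<xi> a \<cdot>\<^sub>m Uh \<xi>) D) = msum (2^n) (\<lambda>\<xi>. \<xi> a \<cdot>\<^sub>m Uh \<xi>) D" .
  show ?thesis unfolding Ph_def' adj_smult M by simp
qed

lemma U_Ph: assumes g: "g \<in> G" and b: "b \<in> G" shows "U g * Ph b = Ph (bx b g) * U g"
proof -
  have "U g * msum (2^n) (\<lambda>\<xi>. \<xi> b \<cdot>\<^sub>m Uh \<xi>) D = msum (2^n) (\<lambda>\<xi>. U g * (\<xi> b \<cdot>\<^sub>m Uh \<xi>)) D"
    using g by (intro msum_mult_left) auto
  also have "\<dots> = msum (2^n) (\<lambda>\<xi>. (\<xi> (bx b g) \<cdot>\<^sub>m Uh \<xi>) * U g) D"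
  proof (intro msum_cong)
    fix \<xi> assume x: "\<xi> \<in> D"
    have "U g * (\<xi> b \<cdot>\<^sub>m Uh \<xi>) = \<xi> b \<cdot>\<^sub>m (U g * Uh \<xi>)"
      by (rule mult_smult_distrib[OF U_carrier[OF g] Uh_carrier[OF x]])
    also have "\<dots> = (\<xi> b * \<xi> g) \<cdot>\<^sub>m (Uh \<xi> * U g)" by (simp add: U_Uh[OF g x] smult_smult_m)
    also have "\<dots> = (\<xi> (bx b g) \<cdot>\<^sub>m Uh \<xi>) * U g"
      using g x b by (simp add: mult_smult_assoc_mat[OF Uh_carrier[OF x] U_carrier[OF g]] D_mult)
    finally show "U g * (\<xi> b \<cdot>\<^sub>m Uh \<xi>) = (\<xi> (bx b g) \<cdot>\<^sub>m Uh \<xi>) * U g" .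
  qed
  also have "\<dots> = msum (2^n) (\<lambda>\<xi>. \<xi> (bx b g) \<cdot>\<^sub>m Uh \<xi>) D * U g"
    using g by (intro msum_mult_right[symmetric]) auto
  finally have "U g * msum (2^n) (\<lambda>\<xi>. \<xi> b \<cdot>\<^sub>m Uh \<xi>) D = msum (2^n) (\<lambda>\<xi>. \<xi> (bx b g) \<cdot>\<^sub>m Uh \<xi>) D * U g" .
  then show ?thesis unfolding Ph_def' mult_smult_distrib[OF U_carrier[OF g] msum_carrier]
      mult_smult_assoc_mat[OF msum_carrier U_carrier[OF g]] by simp
qed

lemma Msum_mult:
  assumes a: "a \<in> G" and b: "b \<in> G"
  shows "msum (2^n) (\<lambda>\<xi>. \<xi> a \<cdot>\<^sub>m Uh \<xi>) D * msum (2^n) (\<lambda>\<xi>. \<xi> b \<cdot>\<^sub>m Uh \<xi>) D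
       = msum (2^n) (\<lambda>\<zeta>. ((if a = b then 2^m else 0) * \<zeta> b) \<cdot>\<^sub>m Uh \<zeta>) D"
proof -
  have "msum (2^n) (\<lambda>\<xi>. \<xi> a \<cdot>\<^sub>m Uh \<xi>) D * msum (2^n) (\<lambda>\<xi>. \<xi> b \<cdot>\<^sub>m Uh \<xi>) D
     = msum (2^n) (\<lambda>\<xi>. (\<xi> a \<cdot>\<^sub>m Uh \<xi>) * msum (2^n) (\<lambda>\<xi>. \<xi> b \<cdot>\<^sub>m Uh \<xi>) D) D"
    by (intro msum_mult_right) auto
  also have "\<dots> = msum (2^n) (\<lambda>\<xi>. msum (2^n) (\<lambda>\<zeta>. (\<xi> a * \<xi> b * \<zeta> b) \<cdot>\<^sub>m Uh \<zeta>) D) D"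
  proof (intro msum_cong)
    fix \<xi> assume x: "\<xi> \<in> D"
    have "(\<xi> a \<cdot>\<^sub>m Uh \<xi>) * msum (2^n) (\<lambda>\<xi>. \<xi> b \<cdot>\<^sub>m Uh \<xi>) D
        = msum (2^n) (\<lambda>\<eta>. (\<xi> a \<cdot>\<^sub>m Uh \<xi>) * (\<eta> b \<cdot>\<^sub>m Uh \<eta>)) D"
      using x by (intro msum_mult_left) auto
    also have "\<dots> = msum (2^n) (\<lambda>\<zeta>. (\<xi> a \<cdot>\<^sub>m Uh \<xi>) * (char_mult \<xi> \<zeta> b \<cdot>\<^sub>m Uh (char_mult \<xi> \<zeta>))) D"
      by (rule msum_reindex[OF D_bij[OF x]])
    also have "\<dots> = msum (2^n) (\<lambda>\<zeta>. (\<xi> a * \<xi> b * \<zeta> b) \<cdot>\<^sub>m Uh \<zeta>) D"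
    proof (intro msum_cong)
      fix \<zeta> assume z: "\<zeta> \<in> D"
      have "(\<xi> a \<cdot>\<^sub>m Uh \<xi>) * (char_mult \<xi> \<zeta> b \<cdot>\<^sub>m Uh (char_mult \<xi> \<zeta>))
          = (\<xi> a * char_mult \<xi> \<zeta> b) \<cdot>\<^sub>m (Uh \<xi> * Uh (char_mult \<xi> \<zeta>))"
        by (rule smult_mult_smult[OF Uh_carrier[OF x] Uh_carrier[OF cm_D[OF x z]]])
      also have "Uh \<xi> * Uh (char_mult \<xi> \<zeta>) = Uh \<zeta>"
        using Uh_mult[OF x cm_D[OF x z]] cm_cancel[OF x] by simp
      finally show "(\<xi> a \<cdot>\<^sub>m Uh \<xi>) * (char_mult \<xi> \<zeta> b \<cdot>\<^sub>m Uh (char_mult \<xi> \<zeta>)) = (\<xi> a * \<xi> b * \<zeta> b) \<cdot>\<^sub>m Uh \<zeta>"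
        by (simp add: char_mult_def mult.assoc)
    qed
    finally show "(\<xi> a \<cdot>\<^sub>m Uh \<xi>) * msum (2^n) (\<lambda>\<xi>. \<xi> b \<cdot>\<^sub>m Uh \<xi>) D
        = msum (2^n) (\<lambda>\<zeta>. (\<xi> a * \<xi> b * \<zeta> b) \<cdot>\<^sub>m Uh \<zeta>) D" .
  qed
  also have "\<dots> = msum (2^n) (\<lambda>\<zeta>. msum (2^n) (\<lambda>\<xi>. (\<xi> a * \<xi> b * \<zeta> b) \<cdot>\<^sub>m Uh \<zeta>) D) D"
    by (rule msum_swap)
  also have "\<dots> = msum (2^n) (\<lambda>\<zeta>. (\<Sum>\<xi>\<in>D. \<xi> a * \<xi> b * \<zeta> b) \<cdot>\<^sub>m Uh \<zeta>) D"
    by (intro msum_cong msum_scalar) auto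
  also have "\<dots> = msum (2^n) (\<lambda>\<zeta>. ((if a = b then 2^m else 0) * \<zeta> b) \<cdot>\<^sub>m Uh \<zeta>) D"
  proof (intro msum_cong arg_cong2[where f="(\<cdot>\<^sub>m)"] refl)
    fix \<zeta> assume "\<zeta> \<in> D"
    have "(\<Sum>\<xi>\<in>D. \<xi> a * \<xi> b * \<zeta> b) = (\<Sum>\<xi>\<in>D. \<xi> (bx a b)) * \<zeta> b"
      using a b by (simp add: sum_distrib_right D_mult)
    also have "\<dots> = (if a = b then 2^m else 0) * \<zeta> b"
      using charsum_D[of "bx a b"] a b by (simp add: bit_eq_iff bit_xor_iff)
    finally show "(\<Sum>\<xi>\<in>D. \<xi> a * \<xi> b * \<zeta> b) = (if a = b then 2^m else 0) * \<zeta> b" .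
  qed
  finally show ?thesis .
qed

lemma Ph_mult: assumes a: "a \<in> G" and b: "b \<in> G"
  shows "Ph a * Ph b = (if a = b then Ph a else 0\<^sub>m (2^n) (2^n))"
proof -
  have "Ph a * Ph b = (1 / 2^m * (1 / 2^m)) \<cdot>\<^sub>m msum (2^n) (\<lambda>\<zeta>. ((if a = b then 2^m else 0) * \<zeta> b) \<cdot>\<^sub>m Uh \<zeta>) D"
    unfolding Ph_def' smult_mult_smult[OF msum_carrier msum_carrier] Msum_mult[OF a b] ..
  also have "\<dots> = (if a = b then Ph a else 0\<^sub>m (2^n) (2^n))"
  proof (cases "a = b")
    case True
    have "msum (2^n) (\<lambda>\<zeta>. ((if a = b then 2^m else 0) * \<zeta> b) \<cdot>\<^sub>m Uh \<zeta>) D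
        = (2^m) \<cdot>\<^sub>m msum (2^n) (\<lambda>\<zeta>. \<zeta> a \<cdot>\<^sub>m Uh \<zeta>) D"
      using True by (subst msum_smult[of _ _ "2^n"]) (auto intro!: msum_cong simp: smult_smult_m)
    then show ?thesis using True unfolding Ph_def' by (simp add: smult_smult_m)
  next
    case False
    have "msum (2^n) (\<lambda>\<zeta>. ((if a = b then 2^m else 0) * \<zeta> b) \<cdot>\<^sub>m Uh \<zeta>) D = msum (2^n) (\<lambda>\<zeta>. 0\<^sub>m (2^n) (2^n)) D"
      using False by (intro msum_cong) (auto simp: zero_smult_m)
    then show ?thesis using False by (simp add: msum_zero)
  qed
  finally show ?thesis .
qed

lemma sum_Ph: "msum (2^n) Ph G = 1\<^sub>m (2^n)"
proof -
  have "msum (2^n) Ph G = (1 / 2^m) \<cdot>\<^sub>m msum (2^n) (\<lambda>a. msum (2^n) (\<lambda>\<xi>. \<xi> a \<cdot>\<^sub>m Uh \<xi>) D) G"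
    unfolding Ph_def' by (subst msum_smult[of _ _ "2^n"]) auto
  also have "msum (2^n) (\<lambda>a. msum (2^n) (\<lambda>\<xi>. \<xi> a \<cdot>\<^sub>m Uh \<xi>) D) G
      = msum (2^n) (\<lambda>\<xi>. msum (2^n) (\<lambda>a. \<xi> a \<cdot>\<^sub>m Uh \<xi>) G) D"
    by (rule msum_swap)
  also have "\<dots> = msum (2^n) (\<lambda>\<xi>. (if \<xi> = triv_char then 2^m else 0) \<cdot>\<^sub>m Uh \<xi>) D"
    by (intro msum_cong) (simp add: msum_scalar charsum_G)
  also have "\<dots> = (if triv_char = triv_char then 2^m else 0) \<cdot>\<^sub>m Uh triv_char"
    using triv_D D_fin by (intro msum_single) (auto simp: zero_smult_m)
  finally show ?thesis by (simp add: Uh_triv smult_smult_m)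
qed

lemma PhPPh: assumes a: "a \<in> G" shows "Ph a * P * Ph a = (1 / 2^m) \<cdot>\<^sub>m Ph a"
proof -
  have "P * Ph a = (1 / 2^m) \<cdot>\<^sub>m msum (2^n) (\<lambda>g. U g * Ph a) G"
    unfolding P_def' by (simp add: mult_smult_assoc_mat[OF msum_carrier Ph_carrier] msum_mult_right[of _ "2^n"])
  moreover have "Ph a * msum (2^n) (\<lambda>g. U g * Ph a) G = msum (2^n) (\<lambda>g. Ph a * (U g * Ph a)) G"
    by (rule msum_mult_left) auto
  ultimately have "Ph a * (P * Ph a) = (1 / 2^m) \<cdot>\<^sub>m msum (2^n) (\<lambda>g. Ph a * (U g * Ph a)) G"
    by (simp add: mult_smult_distrib[OF Ph_carrier msum_carrier])
  also have "msum (2^n) (\<lambda>g. Ph a * (U g * Ph a)) G = Ph a"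
  proof -
    have "msum (2^n) (\<lambda>g. Ph a * (U g * Ph a)) G = msum (2^n) (\<lambda>g. U g * (Ph (bx a g) * Ph a)) G"
    proof (intro msum_cong)
      fix g assume g: "g \<in> G"
      have eq: "Ph a * U g = U g * Ph (bx a g)" using U_Ph[OF g G_xor[OF a g]] by simp
      have "Ph a * (U g * Ph a) = (Ph a * U g) * Ph a"
        by (rule assoc_mult_mat[of _ "2^n" "2^n" _ "2^n" _ "2^n", symmetric]) (use g in auto)
      also have "\<dots> = (U g * Ph (bx a g)) * Ph a" by (simp only: eq)
      also have "\<dots> = U g * (Ph (bx a g) * Ph a)"
        by (rule assoc_mult_mat[of _ "2^n" "2^n" _ "2^n" _ "2^n"]) (use g in auto)
      finally show "Ph a * (U g * Ph a) = U g * (Ph (bx a g) * Ph a)" .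
    qed
    also have "\<dots> = U 0 * (Ph (bx a 0) * Ph a)"
    proof (rule msum_single)
      fix g assume g: "g \<in> G" "g \<noteq> 0"
      then have "bx a g \<noteq> a" by (metis xor_cancel(2) xor.comm_neutral)
      then show "U g * (Ph (bx a g) * Ph a) = 0\<^sub>m (2^n) (2^n)" using g a by (simp add: Ph_mult)
    qed (use G_simps a in auto)
    also have "\<dots> = Ph a" using a by (simp add: U_0 Ph_mult)
    finally show ?thesis .
  qed
  finally show ?thesis by (simp add: assoc_mult_mat[OF Ph_carrier P_carrier Ph_carrier])
qed
end



lemma sgnb_sum:
  assumes b: "b \<noteq> 0" "b < 2^n"
  shows "(\<Sum>i<2^n. sgnb n b i) = 0"
proof -
  obtain j where j: "bit b j" using bit_exists[OF b(1)] by blast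
  have jn: "j < n" using bit_lt[OF b(2) j] .
  define t :: nat where "t = 2^j"
  have tn: "t < 2^n" unfolding t_def using jn by (simp add: power_strict_increasing)
  have bij: "bij_betw (\<lambda>i. bx i t) {..<2^n} {..<2^n}"
    by (rule bij_betw_byWitness[where f'="\<lambda>i. bx i t"]) (use tn xor_lt in auto)
  have set_eq: "{j'. j' < n \<and> bit b j' \<and> bit t j'} = {j}"
    unfolding t_def using j jn by (auto simp: bit_exp_iff)
  have st: "sgnb n b t = -1" unfolding sgnb_def set_eq by simp
  have "(\<Sum>i<2^n. sgnb n b i) = (\<Sum>i<2^n. sgnb n b (bx i t))"
    using sum.reindex_bij_betw[OF bij, of "sgnb n b"] by simp
  also have "\<dots> = - (\<Sum>i<2^n. sgnb n b i)" by (simp add: sgnb_xor st sum_negf)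
  finally show ?thesis by simp
qed

lemma neg_one_mat: "(-1::complex) \<cdot>\<^sub>m 1\<^sub>m d = - 1\<^sub>m d"
  by (rule eq_matI) auto

lemma inv_cols:
  fixes C :: "complex mat"
  assumes C: "C \<in> carrier_mat N N" and inv: "invertible_mat C" and ij: "i < N" "j < N" "i \<noteq> j"
    and col: "\<forall>l<N. C $$ (l,j) = \<gamma> * C $$ (l,i)"
  shows False
proof -
  obtain B where CB: "C * B = 1\<^sub>m N" and BC: "B * C = 1\<^sub>m (dim_row B)"
    using inv C unfolding invertible_mat_def inverts_mat_def by auto
  have "dim_col (B * C) = N" using C by simp
  then have rB: "dim_row B = N" using BC by simp
  have "dim_col (C * B) = N" using CB by simp
  then have cB: "dim_col B = N" by simp
  have B: "B \<in> carrier_mat N N" using rB cB by auto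
  define v where "v = vec N (\<lambda>t. if t = j then 1 else if t = i then - \<gamma> else (0::complex))"
  have v: "v \<in> carrier_vec N" unfolding v_def by simp
  have Cv: "C *\<^sub>v v = 0\<^sub>v N"
  proof (rule eq_vecI)
    fix l assume "l < dim_vec (0\<^sub>v N :: complex vec)"
    then have l: "l < N" by simp
    have "(C *\<^sub>v v) $ l = (\<Sum>t<N. C $$ (l,t) * v $ t)"
      using C l v by (simp add: scalar_prod_def lessThan_atLeast0)
    also have "\<dots> = (\<Sum>t<N. (if t = j then C $$ (l,j) else 0) + (if t = i then - \<gamma> * C $$ (l,i) else 0))"
      unfolding v_def using ij by (intro sum.cong) auto
    also have "\<dots> = C $$ (l,j) - \<gamma> * C $$ (l,i)"
      using ij by (simp add: sum.distrib)
    also have "\<dots> = 0" using col l by simp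
    finally show "(C *\<^sub>v v) $ l = 0\<^sub>v N $ l" using l by simp
  qed (use C in simp)
  have "v = (B * C) *\<^sub>v v" using BC rB v by simp
  also have "\<dots> = B *\<^sub>v (C *\<^sub>v v)" using B C v by (simp add: assoc_mult_mat_vec)
  also have "\<dots> = 0\<^sub>v N" unfolding Cv using B by (intro eq_vecI) auto
  finally have "v $ j = 0" using ij by simp
  then show False unfolding v_def using ij by simp
qed

context setting begin

lemma U_trace: assumes g: "g \<in> G" "g \<noteq> 0" shows "(\<Sum>i<2^n. U g $$ (i,i)) = 0"
proof -
  obtain c a b where c: "c \<in> {1, -1, \<i>, -\<i>}" and ab: "a < 2^n" "b < 2^n" and Ug: "U g = c \<cdot>\<^sub>m pauli_XZ n a b"
    using U_props(1)[OF g(1)] by (rule pauli_decomp)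
  have diag: "U g $$ (i,i) = c * (if i = bx i a then sgnb n b i else 0)" if "i < 2^n" for i
    using that by (simp add: Ug XZ_index)
  show ?thesis
  proof (cases "a = 0")
    case False
    have "i \<noteq> bx i a" for i
    proof
      assume "i = bx i a"
      then have "bx i i = a" by (metis xor_cancel(2))
      then show False using False by simp
    qed
    then show ?thesis using diag by simp
  next
    case a0: True
    show ?thesis
    proof (cases "b = 0")
      case b0: True
      have Ug1: "U g = c \<cdot>\<^sub>m 1\<^sub>m (2^n)" using Ug a0 b0 XZ_00 by simp
      have "(c * c) \<cdot>\<^sub>m 1\<^sub>m (2^n) = (1\<^sub>m (2^n) :: complex mat)"
        using U_sq[OF g(1)] unfolding Ug1 by (simp add: smult_mult_smult[of _ "2^n"])
      then have "((c * c) \<cdot>\<^sub>m 1\<^sub>m (2^n)) $$ (0,0) = (1\<^sub>m (2^n) :: complex mat) $$ (0,0)" by simp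
      then have cc: "c * c = 1" by simp
      then have "c = 1 \<or> c = -1" using c by auto
      then show ?thesis
      proof
        assume "c = 1"
        then have "U g = U 0" using Ug1 U_0 by simp
        then have "g = 0" using stab g G_simps(1) unfolding pauli_stab_rep_def inj_on_def by blast
        then show ?thesis using g by simp
      next
        assume "c = -1"
        then have "U g = - 1\<^sub>m (2^n)" using Ug1 neg_one_mat by simp
        then show ?thesis using stab g unfolding pauli_stab_rep_def by (metis image_eqI)
      qed
    next
      case False
      have "(\<Sum>i<2^n. U g $$ (i,i)) = (\<Sum>i<2^n. c * sgnb n b i)"
        using diag a0 by simp
      also have "\<dots> = c * (\<Sum>i<2^n. sgnb n b i)" by (simp add: sum_distrib_left)
      also have "\<dots> = 0" using sgnb_sum[OF False ab(2)] by simp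
      finally show ?thesis .
    qed
  qed
qed

lemma P_trace: "(\<Sum>i<2^n. P $$ (i,i)) = 2^n / 2^m"
proof -
  have "(\<Sum>i<2^n. P $$ (i,i)) = (\<Sum>i<2^n. (1 / 2^m) * (\<Sum>g\<in>G. U g $$ (i,i)))"
    by (intro sum.cong) (auto simp: P_def')
  also have "\<dots> = (1 / 2^m) * (\<Sum>g\<in>G. \<Sum>i<2^n. U g $$ (i,i))"
    by (simp only: sum_distrib_left) (rule sum.swap)
  also have "(\<Sum>g\<in>G. \<Sum>i<2^n. U g $$ (i,i)) = (\<Sum>g\<in>G. if g = 0 then 2^n else 0)"
    by (intro sum.cong) (auto simp: U_trace U_0)
  also have "\<dots> = 2^n" using G_simps by simp
  finally show ?thesis by simp
qed

lemma P_nz: "\<exists>i j. i < 2^n \<and> j < 2^n \<and> P $$ (i,j) \<noteq> 0"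
proof (rule ccontr)
  assume "\<not> ?thesis"
  then have "(\<Sum>i<2^n. P $$ (i,i)) = 0" by auto
  then show False using P_trace by simp
qed

lemma P_cancel: "x \<cdot>\<^sub>m P = y \<cdot>\<^sub>m P \<Longrightarrow> x = y"
proof -
  assume xy: "x \<cdot>\<^sub>m P = y \<cdot>\<^sub>m P"
  obtain i j where ij: "i < 2^n" "j < 2^n" "P $$ (i,j) \<noteq> 0" using P_nz by blast
  have "(x \<cdot>\<^sub>m P) $$ (i,j) = (y \<cdot>\<^sub>m P) $$ (i,j)" using xy by simp
  then show "x = y" using ij by simp
qed

lemma E_props: "\<xi> \<in> D \<Longrightarrow> E \<xi> \<in> pauli_group n"
  using Ep by auto

lemma E_carrier[simp]: "\<xi> \<in> D \<Longrightarrow> E \<xi> \<in> carrier_mat (2^n) (2^n)"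
  using E_props pauli_carrier by blast

lemma E_dims[simp]: "\<xi> \<in> D \<Longrightarrow> dim_row (E \<xi>) = 2^n" "\<xi> \<in> D \<Longrightarrow> dim_col (E \<xi>) = 2^n"
  using E_carrier carrier_matD by blast+

lemma E_unit: "\<xi> \<in> D \<Longrightarrow> mat_adjoint (E \<xi>) * E \<xi> = 1\<^sub>m (2^n)" "\<xi> \<in> D \<Longrightarrow> E \<xi> * mat_adjoint (E \<xi>) = 1\<^sub>m (2^n)"
  using pauli_unitary E_props by blast+


lemma smult_r[simp]: "X \<in> carrier_mat (2^n) (2^n) \<Longrightarrow> Y \<in> carrier_mat (2^n) (2^n) \<Longrightarrow> X * (c \<cdot>\<^sub>m Y) = c \<cdot>\<^sub>m (X * (Y :: complex mat))"
  by (rule mult_smult_distrib)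

lemma smult_l[simp]: "X \<in> carrier_mat (2^n) (2^n) \<Longrightarrow> Y \<in> carrier_mat (2^n) (2^n) \<Longrightarrow> (c \<cdot>\<^sub>m X) * Y = c \<cdot>\<^sub>m (X * (Y :: complex mat))"
  by (rule mult_smult_assoc_mat)

declare smult_smult_m[simp]

lemma cwD: "bij_betw e {..<card D} D" "C \<in> carrier_mat (card D) (card D)"
  "\<And>i j. i < card D \<Longrightarrow> j < card D \<Longrightarrow> P * mat_adjoint (E (e i)) * E (e j) * P = C $$ (i, j) \<cdot>\<^sub>m P"
  using cw unfolding correctable_with_def by auto

lemma e_surj: "\<xi> \<in> D \<Longrightarrow> \<exists>i<card D. e i = \<xi>"
  using cwD(1) unfolding bij_betw_def by force

lemma K: assumes x: "\<xi> \<in> D" and x': "\<xi>' \<in> D" and ne: "\<xi> \<noteq> \<xi>'"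
  shows "P * mat_adjoint (E \<xi>) * E \<xi>' * P = 0\<^sub>m (2^n) (2^n)"
proof -
  define A where "A = mat_adjoint (E \<xi>)"
  define B where "B = E \<xi>'"
  define Q where "Q = A * B"
  have A: "A \<in> carrier_mat (2^n) (2^n)" unfolding A_def using x by simp
  have B: "B \<in> carrier_mat (2^n) (2^n)" unfolding B_def using x' by simp
  have Q: "Q \<in> carrier_mat (2^n) (2^n)" unfolding Q_def using A B by simp
  have Ap: "A \<in> pauli_group n" unfolding A_def using pauli_adj E_props x by blast
  have Bp: "B \<in> pauli_group n" unfolding B_def using E_props x' by blast
  have eq: "P * mat_adjoint (E \<xi>) * E \<xi>' * P = P * Q * P"
    unfolding Q_def A_def[symmetric] B_def[symmetric] using A B by simp
  have comm: "\<exists>\<sigma>. (\<sigma> = 1 \<or> \<sigma> = -1) \<and> U g * Q = \<sigma> \<cdot>\<^sub>m (Q * U g)" if g: "g \<in> G" for g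
  proof -
    obtain \<sigma>1 where s1: "\<sigma>1 = 1 \<or> \<sigma>1 = -1" "U g * A = \<sigma>1 \<cdot>\<^sub>m (A * U g)"
      using pauli_comm[OF U_props(1)[OF g] Ap] by blast
    obtain \<sigma>2 where s2: "\<sigma>2 = 1 \<or> \<sigma>2 = -1" "U g * B = \<sigma>2 \<cdot>\<^sub>m (B * U g)"
      using pauli_comm[OF U_props(1)[OF g] Bp] by blast
    have "U g * Q = (U g * A) * B" unfolding Q_def using A B g by simp
    also have "\<dots> = \<sigma>1 \<cdot>\<^sub>m (A * (U g * B))" unfolding s1(2) using A B g
      by (simp add: mult_smult_assoc_mat[of _ "2^n" "2^n"])
    also have "\<dots> = (\<sigma>1 * \<sigma>2) \<cdot>\<^sub>m (Q * U g)" unfolding s2(2) Q_def using A B g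
      by (simp add: mult_smult_distrib[of _ "2^n" "2^n"] smult_smult_m)
    finally show ?thesis using s1(1) s2(1) by auto
  qed
  show ?thesis
  proof (cases "\<exists>g\<in>G. U g * Q = (-1) \<cdot>\<^sub>m (Q * U g)")
    case True
    then obtain g where g: "g \<in> G" "U g * Q = (-1) \<cdot>\<^sub>m (Q * U g)" by blast
    have "P * Q * P = (P * U g) * Q * P" using P_U[OF g(1)] by simp
    also have "\<dots> = P * (U g * Q) * P" using g Q by simp
    also have "\<dots> = (-1) \<cdot>\<^sub>m (P * Q * (U g * P))" unfolding g(2) using g Q
      by (simp add: mult_smult_distrib[of _ "2^n" "2^n"] mult_smult_assoc_mat[of _ "2^n" "2^n"])
    also have "\<dots> = (-1) \<cdot>\<^sub>m (P * Q * P)" using U_P[OF g(1)] by simp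
    finally have "P * Q * P = 0\<^sub>m (dim_row (P * Q * P)) (dim_col (P * Q * P))" by (rule neg_self_zero)
    then show ?thesis unfolding eq by simp
  next
    case False
    have QU: "U g * Q = Q * U g" if g: "g \<in> G" for g
      using comm[OF g] False g by auto
    have QP: "Q * P = P * Q"
    proof -
      have "Q * msum (2^n) U G = msum (2^n) (\<lambda>g. Q * U g) G" using Q by (intro msum_mult_left) auto
      also have "\<dots> = msum (2^n) (\<lambda>g. U g * Q) G" by (intro msum_cong) (simp add: QU)
      also have "\<dots> = msum (2^n) U G * Q" using Q by (intro msum_mult_right[symmetric]) auto
      finally show ?thesis unfolding P_def' using Q
        by (simp add: mult_smult_distrib[of _ "2^n" "2^n"] mult_smult_assoc_mat[of _ "2^n" "2^n"])
    qed
    have PQP: "P * Q * P = Q * P"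
    proof -
      have "P * Q * P = (Q * P) * P" using QP by simp
      also have "\<dots> = Q * P" using Q by (simp add: P_idem)
      finally show ?thesis .
    qed
    obtain i where i: "i < card D" "e i = \<xi>" using e_surj[OF x] by blast
    obtain j where j: "j < card D" "e j = \<xi>'" using e_surj[OF x'] by blast
    have ij: "i \<noteq> j" using i j ne by auto
    define \<gamma> where "\<gamma> = C $$ (i,j)"
    have QPg: "Q * P = \<gamma> \<cdot>\<^sub>m P" using cwD(3)[OF i(1) j(1)] eq PQP i j unfolding \<gamma>_def by simp
    have EP: "B * P = \<gamma> \<cdot>\<^sub>m (E \<xi> * P)"
    proof -
      have "B * P = (E \<xi> * A) * B * P" unfolding A_def using E_unit(2)[OF x] B by simp
      also have "\<dots> = E \<xi> * (Q * P)" unfolding Q_def using A B x by simp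
      also have "\<dots> = \<gamma> \<cdot>\<^sub>m (E \<xi> * P)" unfolding QPg using x by (simp add: mult_smult_distrib[of _ "2^n" "2^n"])
      finally show ?thesis .
    qed
    have col: "\<forall>l<card D. C $$ (l,j) = \<gamma> * C $$ (l,i)"
    proof (intro allI impI)
      fix l assume l: "l < card D"
      have el: "e l \<in> D" using cwD(1) l unfolding bij_betw_def by auto
      have "C $$ (l,j) \<cdot>\<^sub>m P = P * mat_adjoint (E (e l)) * B * P" using cwD(3)[OF l j(1)] j unfolding B_def by simp
      also have "\<dots> = P * mat_adjoint (E (e l)) * (B * P)" using el B by simp
      also have "\<dots> = \<gamma> \<cdot>\<^sub>m (P * mat_adjoint (E (e l)) * E \<xi> * P)" unfolding EP using el x
        by (simp add: mult_smult_distrib[of _ "2^n" "2^n"])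
      also have "\<dots> = (\<gamma> * C $$ (l,i)) \<cdot>\<^sub>m P" using cwD(3)[OF l i(1)] i by (simp add: smult_smult_m)
      finally show "C $$ (l,j) = \<gamma> * C $$ (l,i)" by (rule P_cancel)
    qed
    show ?thesis using inv_cols[OF cwD(2) Cinv i(1) j(1) ij col] ..
  qed
qed

lemma K': "\<xi> \<in> D \<Longrightarrow> \<xi>' \<in> D \<Longrightarrow> \<xi> \<noteq> \<xi>' \<Longrightarrow> P * (mat_adjoint (E \<xi>) * (E \<xi>' * P)) = 0\<^sub>m (2^n) (2^n)"
  using K by simp

lemma PEP0: assumes x: "\<xi> \<in> D" "\<xi> \<noteq> triv_char" shows "P * (E \<xi> * P) = 0\<^sub>m (2^n) (2^n)"
  using K'[OF triv_D x(1)] x by (simp add: E1)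

lemma PEEP: assumes x: "\<xi> \<in> D" and y: "\<eta> \<in> D"
  shows "P * (E \<xi> * (mat_adjoint (E \<eta>) * P)) = (if \<xi> = \<eta> then P else 0\<^sub>m (2^n) (2^n))"
proof -
  have "E \<xi> * (mat_adjoint (E \<eta>) * P) = (E \<xi> * mat_adjoint (E \<eta>)) * P"
    by (rule assoc_mult_mat[symmetric]) (use x y in auto)
  then have eq: "P * (E \<xi> * (mat_adjoint (E \<eta>) * P)) = P * ((E \<xi> * mat_adjoint (E \<eta>)) * P)" by simp
  show ?thesis
  proof (cases "\<xi> = \<eta>")
    case True
    then show ?thesis unfolding eq using E_unit(2)[OF x] by (simp add: P_idem)
  next
    case False
    obtain \<sigma> where s: "E \<xi> * mat_adjoint (E \<eta>) = \<sigma> \<cdot>\<^sub>m (mat_adjoint (E \<eta>) * E \<xi>)"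
      using pauli_comm[OF E_props[OF x] pauli_adj[OF E_props[OF y]]] by blast
    have "P * ((E \<xi> * mat_adjoint (E \<eta>)) * P) = \<sigma> \<cdot>\<^sub>m (P * (mat_adjoint (E \<eta>) * (E \<xi> * P)))"
      unfolding s using x y by simp
    also have "\<dots> = 0\<^sub>m (2^n) (2^n)" using K'[OF y x] False by (auto simp: zero_smult_m)
    finally show ?thesis unfolding eq using False by simp
  qed
qed

lemma main: assumes g: "g \<in> G"
  shows "let Eh = complex_of_real (sqrt (2^m)) \<cdot>\<^sub>m msum (2^n) (\<lambda>\<xi>. Ph (h \<xi> g) * P * E \<xi>) D
         in unitary_mat (2^n) Eh \<and> Eh * P = complex_of_real (sqrt (2^m)) \<cdot>\<^sub>m (Ph g * P)"
proof -
  define s where "s = complex_of_real (sqrt (2^m))"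
  have ss: "s * s = 2^m" unfolding s_def of_real_mult[symmetric] by simp
  have cs: "cnj s = s" unfolding s_def by simp
  have hbij: "bij_betw (\<lambda>\<xi>. h \<xi> g) D G" using hb g by auto
  have hG: "h \<xi> g \<in> G" if "\<xi> \<in> D" for \<xi> using hbij that unfolding bij_betw_def by auto
  have h1: "h triv_char g = g" using hb g by auto
  define T where "T = (\<lambda>\<xi>. Ph (h \<xi> g) * P * E \<xi>)"
  define T' where "T' = (\<lambda>\<xi>. mat_adjoint (E \<xi>) * P * Ph (h \<xi> g))"
  have Tc: "T \<xi> \<in> carrier_mat (2^n) (2^n)" if "\<xi> \<in> D" for \<xi> unfolding T_def using that by simp
  have T'c: "T' \<xi> \<in> carrier_mat (2^n) (2^n)" if "\<xi> \<in> D" for \<xi> unfolding T'_def using that by simp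
  have adjT: "mat_adjoint (T \<xi>) = T' \<xi>" if x: "\<xi> \<in> D" for \<xi>
  proof -
    have "mat_adjoint (T \<xi>) = mat_adjoint (E \<xi>) * (mat_adjoint P * mat_adjoint (Ph (h \<xi> g)))"
      unfolding T_def using x by (simp add: adj_mult[of _ "2^n"])
    then show ?thesis unfolding T'_def P_adj Ph_adj using x by simp
  qed
  define Eh where "Eh = s \<cdot>\<^sub>m msum (2^n) T D"
  have Ehc: "Eh \<in> carrier_mat (2^n) (2^n)" unfolding Eh_def by simp
  have adjEh: "mat_adjoint Eh = s \<cdot>\<^sub>m msum (2^n) T' D"
  proof -
    have "mat_adjoint (msum (2^n) T D) = msum (2^n) (\<lambda>\<xi>. mat_adjoint (T \<xi>)) D"
      using Tc by (rule adj_msum)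
    also have "\<dots> = msum (2^n) T' D" by (intro msum_cong) (simp add: adjT)
    finally show ?thesis unfolding Eh_def adj_smult cs by simp
  qed
  have prod: "T \<xi> * T' \<eta> = (if \<xi> = \<eta> then (1 / 2^m) \<cdot>\<^sub>m Ph (h \<xi> g) else 0\<^sub>m (2^n) (2^n))"
    if x: "\<xi> \<in> D" and y: "\<eta> \<in> D" for \<xi> \<eta>
  proof -
    have "T \<xi> * T' \<eta> = Ph (h \<xi> g) * ((P * (E \<xi> * (mat_adjoint (E \<eta>) * P))) * Ph (h \<eta> g))"
      unfolding T_def T'_def using x y by simp
    also have "\<dots> = (if \<xi> = \<eta> then (1 / 2^m) \<cdot>\<^sub>m Ph (h \<xi> g) else 0\<^sub>m (2^n) (2^n))"
      unfolding PEEP[OF x y] using PhPPh[OF hG[OF x]] by (cases "\<xi> = \<eta>") auto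
    finally show ?thesis .
  qed
  have EhEh: "Eh * mat_adjoint Eh = 1\<^sub>m (2^n)"
  proof -
    have "msum (2^n) T D * msum (2^n) T' D = msum (2^n) (\<lambda>\<xi>. T \<xi> * msum (2^n) T' D) D"
      using Tc by (intro msum_mult_right) auto
    also have "\<dots> = msum (2^n) (\<lambda>\<xi>. msum (2^n) (\<lambda>\<eta>. T \<xi> * T' \<eta>) D) D"
      using Tc T'c by (intro msum_cong msum_mult_left) auto
    also have "\<dots> = msum (2^n) (\<lambda>\<xi>. (1 / 2^m) \<cdot>\<^sub>m Ph (h \<xi> g)) D"
    proof (intro msum_cong)
      fix \<xi> assume x: "\<xi> \<in> D"
      have "msum (2^n) (\<lambda>\<eta>. T \<xi> * T' \<eta>) D = T \<xi> * T' \<xi>"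
        using x D_fin Tc T'c by (intro msum_single) (auto simp: prod)
      then show "msum (2^n) (\<lambda>\<eta>. T \<xi> * T' \<eta>) D = (1 / 2^m) \<cdot>\<^sub>m Ph (h \<xi> g)" using prod[OF x x] by simp
    qed
    also have "\<dots> = (1 / 2^m) \<cdot>\<^sub>m msum (2^n) (\<lambda>\<xi>. Ph (h \<xi> g)) D"
      by (subst msum_smult[of _ _ "2^n"]) auto
    also have "msum (2^n) (\<lambda>\<xi>. Ph (h \<xi> g)) D = msum (2^n) Ph G"
      by (rule msum_reindex[OF hbij, symmetric])
    finally have M: "msum (2^n) T D * msum (2^n) T' D = (1 / 2^m) \<cdot>\<^sub>m 1\<^sub>m (2^n)" unfolding sum_Ph .
    show ?thesis unfolding adjEh unfolding Eh_def
      by (simp add: smult_mult_smult[OF msum_carrier msum_carrier] M ss)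
  qed
  have adjEhEh: "mat_adjoint Eh * Eh = 1\<^sub>m (2^n)"
    by (rule mat_mult_left_right_inverse[OF Ehc adj_carrier[OF Ehc] EhEh])
  have EhP: "Eh * P = s \<cdot>\<^sub>m (Ph g * P)"
  proof -
    have "msum (2^n) T D * P = msum (2^n) (\<lambda>\<xi>. T \<xi> * P) D"
      using Tc by (intro msum_mult_right) auto
    also have "\<dots> = T triv_char * P"
    proof (rule msum_single)
      fix \<xi> assume "\<xi> \<in> D" "\<xi> \<noteq> triv_char"
      then show "T \<xi> * P = 0\<^sub>m (2^n) (2^n)" unfolding T_def using PEP0 by simp
    qed (use triv_D D_fin Tc in auto)
    also have "\<dots> = Ph g * P" unfolding T_def h1 E1 using triv_D by (simp add: P_idem)
    finally show ?thesis unfolding Eh_def by simp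
  qed
  have "unitary_mat (2^n) Eh \<and> Eh * P = s \<cdot>\<^sub>m (Ph g * P)"
    unfolding unitary_mat_def using Ehc EhEh adjEhEh EhP by simp
  then show ?thesis unfolding Let_def Eh_def T_def s_def .
qed
end

theorem mainTheorem16:
  fixes n k :: nat
    and U :: "nat \<Rightarrow> complex mat"
    and Uh :: "(nat \<Rightarrow> complex) \<Rightarrow> complex mat"
    and E :: "(nat \<Rightarrow> complex) \<Rightarrow> complex mat"
    and h :: "(nat \<Rightarrow> complex) \<Rightarrow> nat \<Rightarrow> nat"
  assumes "1 \<le> n" and "k < n"
    and "pauli_stab_rep n (n - k) U"
    and "dual_rep n (n - k) U Uh"
    and E_pauli: "\<forall>\<xi>\<in>dual_grp (n - k). E \<xi> \<in> pauli_group n"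
    and corr: "\<exists>e C. correctable_with (proj_pn n (n - k) U) E (dual_grp (n - k)) e C
               \<and> vec_space.rank (card (dual_grp (n - k))) C = 2^(n - k)
               \<and> invertible_mat C"
    and "E triv_char = 1\<^sub>m (2^n)"
    and "\<forall>\<xi>\<in>dual_grp (n - k). \<xi> \<noteq> triv_char \<longrightarrow>
           (\<forall>\<psi>\<in>H_pn n (n - k) U. \<forall>\<phi>\<in>H_pn n (n - k) U. (E \<xi> *\<^sub>v \<psi>) \<bullet>c \<phi> = 0)"
    and "\<forall>g\<in>grp (n - k). bij_betw (\<lambda>\<xi>. h \<xi> g) (dual_grp (n - k)) (grp (n - k))
                          \<and> h triv_char g = g"
  shows "\<forall>g\<in>grp (n - k).
           (let Eh = complex_of_real (sqrt (2^(n - k))) \<cdot>\<^sub>m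
                     msum (2^n) (\<lambda>\<xi>. hatP n (n - k) Uh (h \<xi> g) * proj_pn n (n - k) U * E \<xi>)
                                (dual_grp (n - k))
            in unitary_mat (2^n) Eh
               \<and> Eh * proj_pn n (n - k) U
                   = complex_of_real (sqrt (2^(n - k))) \<cdot>\<^sub>m (hatP n (n - k) Uh g * proj_pn n (n - k) U))"
proof (intro ballI)
  fix g assume g: "g \<in> grp (n - k)"
  obtain e C where cw: "correctable_with (proj_pn n (n - k) U) E (dual_grp (n - k)) e C"
    and inv: "invertible_mat C"
    using corr by blast
  interpret setting n "n - k" U Uh E h e C
    by (unfold_locales) (use assms(3,4) E_pauli cw inv assms(7,9) in auto)
  show "let Eh = complex_of_real (sqrt (2^(n - k))) \<cdot>\<^sub>m
                     msum (2^n) (\<lambda>\<xi>. hatP n (n - k) Uh (h \<xi> g) * proj_pn n (n - k) U * E \<xi>)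
                                (dual_grp (n - k))
            in unitary_mat (2^n) Eh
               \<and> Eh * proj_pn n (n - k) U
                   = complex_of_real (sqrt (2^(n - k))) \<cdot>\<^sub>m (hatP n (n - k) Uh g * proj_pn n (n - k) U)"
    using main[OF g] .
qed

end
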